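(* Let $G$ be a graph and let $\mathcal R=\{G_v: v\in V(G)\}$ be a family of pairwise vertex-disjoint graphs. Then $$\gamma_{gr}(G\hookleftarrow \mathcal R)\geq \max \left\{\gamma_{gr}(G,I)+\sum_{v\in I} \gamma_{gr}(G_v)-|I|\;:\; I \text{ is an independent set of } G\right\}.$$
   Context: All graphs are finite and simple. For a vertex $v$, $N[v]$ is its closed neighborhood. The $X$-join product $G\hookleftarrow \mathcal R$ is the graph obtained from $G$ by replacing every vertex $v$ by $G_v$: its vertex set is $\bigcup_{v\in V(G)}V(G_v)$, its edges are the edges of all $G_v$ together with all edges joining a vertex of $V(G_u)$ with a vertex of $V(G_v)$ whenever $uv\in E(G)$. For a sequence $S=(v_1,\dots,v_k)$ of distinct vertices, $\widehat S=\{v_1,\dots,v_k\}$ and $|S|=k$; the private neighborhood of $v_i$ with respect to $S$ is $PN_S(v_i)=N[v_i]\setminus\bigcup_{j<i}N[v_j]$. $S$ is a legal dominating sequence of $G$ if $\widehat S$ is a dominating set of $G$ and $PN_S(v_i)\neq\emptyset$ for all $i$; $\mathcal L(G)$ is the set of these. A Grundy dominating sequence is a legal dominating sequence of maximum length, and this length is the Grundy domination number $\gamma_{gr}(G)$. For $S\in\mathcal L(G)$, each vertex $x$ lies in $PN_S(v)$ for exactly one $v\in\widehat S$, called the footprinter $f_S(x)$ of $x$; $I_S=\{v: f_S(v)=v\}$. For an independent set $I$ of $G$, $\mathcal L(G,I)=\{S\in\mathcal L(G): I_S=I\}$ and $\gamma_{gr}(G,I)=\max\{|S|: S\in\mathcal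 L(G,I)\}$, with the convention that the maximum of the empty set is $-\infty$. *)

theory Defs
  imports Main "HOL-Library.Extended_Real"
begin

definition graph :: "'a set \<Rightarrow> ('a \<Rightarrow> 'a \<Rightarrow> bool) \<Rightarrow> bool" where
  "graph V E \<longleftrightarrow> finite V \<and> V \<noteq> {} \<and>
     (\<forall>x y. E x y \<longrightarrow> x \<in> V \<and> y \<in> V) \<and>
     (\<forall>x y. E x y \<longrightarrow> E y x) \<and> (\<forall>x. \<not> E x x)"

definition cnbh :: "('a \<Rightarrow> 'a \<Rightarrow> bool) \<Rightarrow> 'a \<Rightarrow> 'a set" where
  "cnbh E x = {y. y = x \<or> E x y}"

definition pn :: "('a \<Rightarrow> 'a \<Rightarrow> bool) \<Rightarrow> 'a list \<Rightarrow> nat \<Rightarrow> 'a set" where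
  "pn E S i = cnbh E (S ! i) - (\<Union>j<i. cnbh E (S ! j))"

definition dominating :: "'a set \<Rightarrow> ('a \<Rightarrow> 'a \<Rightarrow> bool) \<Rightarrow> 'a set \<Rightarrow> bool" where
  "dominating V E D \<longleftrightarrow> D \<subseteq> V \<and> (\<forall>x\<in>V. \<exists>v\<in>D. x \<in> cnbh E v)"

definition legal_dom_seq :: "'a set \<Rightarrow> ('a \<Rightarrow> 'a \<Rightarrow> bool) \<Rightarrow> 'a list \<Rightarrow> bool" where
  "legal_dom_seq V E S \<longleftrightarrow> distinct S \<and> dominating V E (set S) \<and>
     (\<forall>i<length S. pn E S i \<noteq> {})"

definition legal_seqs :: "'a set \<Rightarrow> ('a \<Rightarrow> 'a \<Rightarrow> bool) \<Rightarrow> 'a list set" where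
  "legal_seqs V E = {S. legal_dom_seq V E S}"

definition grundy_dom :: "'a set \<Rightarrow> ('a \<Rightarrow> 'a \<Rightarrow> bool) \<Rightarrow> nat" where
  "grundy_dom V E = Max (length ` legal_seqs V E)"

definition footprinter :: "('a \<Rightarrow> 'a \<Rightarrow> bool) \<Rightarrow> 'a list \<Rightarrow> 'a \<Rightarrow> 'a" where
  "footprinter E S x = (THE v. \<exists>i<length S. S ! i = v \<and> x \<in> pn E S i)"

definition self_footprinted :: "'a set \<Rightarrow> ('a \<Rightarrow> 'a \<Rightarrow> bool) \<Rightarrow> 'a list \<Rightarrow> 'a set" where
  "self_footprinted V E S = {v\<in>V. footprinter E S v = v}"

definition independent :: "'a set \<Rightarrow> ('a \<Rightarrow> 'a \<Rightarrow> bool) \<Rightarrow> 'a set \<Rightarrow> bool" where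
  "independent V E I \<longleftrightarrow> I \<subseteq> V \<and> (\<forall>x\<in>I. \<forall>y\<in>I. \<not> E x y)"

definition legal_seqs_I :: "'a set \<Rightarrow> ('a \<Rightarrow> 'a \<Rightarrow> bool) \<Rightarrow> 'a set \<Rightarrow> 'a list set" where
  "legal_seqs_I V E I = {S \<in> legal_seqs V E. self_footprinted V E S = I}"

definition grundy_dom_I :: "'a set \<Rightarrow> ('a \<Rightarrow> 'a \<Rightarrow> bool) \<Rightarrow> 'a set \<Rightarrow> ereal" where
  "grundy_dom_I V E I =
     (if legal_seqs_I V E I = {} then -\<infinity>
      else ereal (real (Max (length ` legal_seqs_I V E I))))"

definition xjoin_V :: "'a set \<Rightarrow> ('a \<Rightarrow> 'b set) \<Rightarrow> 'b set" where
  "xjoin_V V VV = (\<Union>v\<in>V. VV v)"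

definition xjoin_E :: "'a set \<Rightarrow> ('a \<Rightarrow> 'a \<Rightarrow> bool) \<Rightarrow> ('a \<Rightarrow> 'b set) \<Rightarrow>
    ('a \<Rightarrow> 'b \<Rightarrow> 'b \<Rightarrow> bool) \<Rightarrow> 'b \<Rightarrow> 'b \<Rightarrow> bool" where
  "xjoin_E V E VV EE x y \<longleftrightarrow>
     (\<exists>v\<in>V. x \<in> VV v \<and> y \<in> VV v \<and> EE v x y) \<or>
     (\<exists>u\<in>V. \<exists>v\<in>V. E u v \<and> x \<in> VV u \<and> y \<in> VV v)"

end

theory Submission
  imports Defs
begin


fun chk :: "('a \<Rightarrow> 'a \<Rightarrow> bool) \<Rightarrow> ('a \<Rightarrow> 'a set \<Rightarrow> bool) \<Rightarrow> 'a set \<Rightarrow> 'a list \<Rightarrow> bool" where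
  "chk E P D [] = True"
| "chk E P D (x#xs) = (P x D \<and> chk E P (D \<union> cnbh E x) xs)"

lemma UN_Suc_cons: "(\<Union>j<Suc k. f ((x#xs)!j)) = f x \<union> (\<Union>j<k. f (xs!j))"
  by (auto simp: lessThan_Suc_eq_insert_0)

lemma chk_nth: "chk E P D xs \<longleftrightarrow> (\<forall>k<length xs. P (xs!k) (D \<union> (\<Union>j<k. cnbh E (xs!j))))"
proof (induction xs arbitrary: D)
  case Nil then show ?case by simp
next
  case (Cons x xs)
  have "(\<forall>k<length (x#xs). P ((x#xs)!k) (D \<union> (\<Union>j<k. cnbh E ((x#xs)!j)))) \<longleftrightarrow>
        P x D \<and> (\<forall>k<length xs. P (xs!k) (D \<union> cnbh E x \<union> (\<Union>j<k. cnbh E (xs!j))))"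
    by (simp add: All_less_Suc2 UN_Suc_cons Un_assoc del: lessThan_iff)
  then show ?case using Cons.IH by simp
qed

lemma chk_append: "chk E P D (xs @ ys) \<longleftrightarrow> chk E P D xs \<and> chk E P (D \<union> \<Union>(cnbh E ` set xs)) ys"
  by (induction xs arbitrary: D) (simp_all add: Un_assoc)

lemma pn_chk: "(\<forall>i<length S. pn E S i \<noteq> {}) \<longleftrightarrow> chk E (\<lambda>x D. cnbh E x - D \<noteq> {}) {} S"
  by (simp add: chk_nth pn_def)



lemma pn_unique:
  assumes "x \<in> pn E S i" "x \<in> pn E S i'" shows "i = i'"
proof (rule ccontr)
  assume "i \<noteq> i'"
  then have "i < i' \<or> i' < i" by arith
  then show False using assms unfolding pn_def by auto
qed

lemma foot_eq:
  assumes "i < length S" "x \<in> pn E S i" shows "footprinter E S x = S!i"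
  unfolding footprinter_def
proof (rule the_equality)
  show "\<exists>j<length S. S ! j = S ! i \<and> x \<in> pn E S j" using assms by blast
next
  fix v assume "\<exists>j<length S. S ! j = v \<and> x \<in> pn E S j"
  then obtain j where "S!j = v" "x \<in> pn E S j" by blast
  then show "v = S!i" using pn_unique[OF assms(2)] by auto
qed

lemma foot_ex:
  assumes "legal_dom_seq V E S" "x \<in> V" shows "\<exists>j<length S. x \<in> pn E S j"
proof -
  obtain v where "v \<in> set S" "x \<in> cnbh E v" using assms unfolding legal_dom_seq_def dominating_def by blast
  then have ex: "\<exists>i. i < length S \<and> x \<in> cnbh E (S!i)" by (metis in_set_conv_nth)
  define j where "j = (LEAST i. i < length S \<and> x \<in> cnbh E (S!i))"
  have j: "j < length S \<and> x \<in> cnbh E (S!j)" using LeastI_ex[OF ex] j_def by simp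
  have "\<not> (k < length S \<and> x \<in> cnbh E (S!k))" if "k < j" for k
    using not_less_Least[of k "\<lambda>i. i < length S \<and> x \<in> cnbh E (S!i)"] that j_def by simp
  then have "x \<in> pn E S j" using j unfolding pn_def by auto
  then show ?thesis using j by blast
qed

lemma legal_finite:
  assumes "finite V" shows "finite (legal_seqs V E)"
proof -
  have "legal_seqs V E \<subseteq> {xs. set xs \<subseteq> V \<and> length xs \<le> card V}"
  proof
    fix S assume "S \<in> legal_seqs V E"
    then have "distinct S" "set S \<subseteq> V" unfolding legal_seqs_def legal_dom_seq_def dominating_def by auto
    then show "S \<in> {xs. set xs \<subseteq> V \<and> length xs \<le> card V}"
    proof -
      have "length S = card (set S)" using \<open>distinct S\<close> by (simp add: distinct_card)
      also have "\<dots> \<le> card V" using card_mono[OF assms \<open>set S \<subseteq> V\<close>] .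
      finally show ?thesis using \<open>set S \<subseteq> V\<close> by simp
    qed
  qed
  then show ?thesis by (rule finite_subset) (rule finite_lists_length_le[OF assms])
qed

lemma legal_exists_aux:
  assumes "finite V"
  shows "\<forall>S. card (V - \<Union>(cnbh E ` set S)) = n \<longrightarrow> distinct S \<longrightarrow> set S \<subseteq> V \<longrightarrow>
     chk E (\<lambda>x D. cnbh E x - D \<noteq> {}) {} S \<longrightarrow> legal_seqs V E \<noteq> {}"
proof (induction n rule: less_induct)
  case (less n)
  show ?case
  proof (intro allI impI)
    fix S assume c: "card (V - \<Union>(cnbh E ` set S)) = n" and d: "distinct S" and s: "set S \<subseteq> V"
      and k: "chk E (\<lambda>x D. cnbh E x - D \<noteq> {}) {} S"
    show "legal_seqs V E \<noteq> {}"
    proof (cases "V - \<Union>(cnbh E ` set S) = {}")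
      case True
      then have "legal_dom_seq V E S" using d s k pn_chk[of S E] unfolding legal_dom_seq_def dominating_def
        by blast
      then show ?thesis unfolding legal_seqs_def by blast
    next
      case False
      then obtain x where x: "x \<in> V" "x \<notin> \<Union>(cnbh E ` set S)" by blast
      have xc: "x \<in> cnbh E x" unfolding cnbh_def by simp
      have xS: "x \<notin> set S" using x xc by blast
      let ?S = "S @ [x]"
      have "V - \<Union>(cnbh E ` set ?S) \<subset> V - \<Union>(cnbh E ` set S)" using x xc by auto
      then have "card (V - \<Union>(cnbh E ` set ?S)) < n" using c assms by (metis finite_Diff psubset_card_mono)
      moreover have "chk E (\<lambda>x D. cnbh E x - D \<noteq> {}) {} ?S" using k x xc by (auto simp: chk_append)
      ultimately show ?thesis using less.IH d xS s x by auto
    qed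
  qed
qed

lemma legal_exists: "finite V \<Longrightarrow> legal_seqs V E \<noteq> {}"
  by (rule legal_exists_aux[of V E "card V", rule_format, of "[]"]) simp_all

lemma grundy_ex:
  assumes "finite V" shows "\<exists>T. T \<in> legal_seqs V E \<and> length T = grundy_dom V E"
proof -
  have "grundy_dom V E \<in> length ` legal_seqs V E" unfolding grundy_dom_def
    using legal_finite[OF assms] legal_exists[OF assms] by (intro Max_in) auto
  then show ?thesis by auto
qed

lemma grundy_ge:
  assumes "finite V" "S \<in> legal_seqs V E" shows "length S \<le> grundy_dom V E"
  unfolding grundy_dom_def using legal_finite[OF assms(1)] assms(2) by (intro Max_ge) auto

lemma chk_transfer:
  assumes "chk E P D xs" "\<forall>x\<in>set xs. cnbh E x \<subseteq> cnbh E' x \<inter> A \<and> cnbh E' x \<inter> A \<subseteq> cnbh E x"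
    "D' \<inter> A \<subseteq> D" "P = (\<lambda>x D. cnbh E x - D \<noteq> {})"
  shows "chk E' (\<lambda>x D. cnbh E' x - D \<noteq> {}) D' xs"
  using assms
proof (induction xs arbitrary: D D')
  case Nil then show ?case by simp
next
  case (Cons x xs)
  obtain y where y: "y \<in> cnbh E x" "y \<notin> D" using Cons.prems(1,4) by auto
  have "y \<in> cnbh E' x" "y \<in> A" using y Cons.prems(2) by auto
  then have "cnbh E' x - D' \<noteq> {}" using y Cons.prems(3) by blast
  moreover have "chk E' (\<lambda>x D. cnbh E' x - D \<noteq> {}) (D' \<union> cnbh E' x) xs"
  proof (rule Cons.IH)
    show "chk E P (D \<union> cnbh E x) xs" using Cons.prems(1) by simp
    show "\<forall>x\<in>set xs. cnbh E x \<subseteq> cnbh E' x \<inter> A \<and> cnbh E' x \<inter> A \<subseteq> cnbh E x" using Cons.prems(2) by simp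
    show "(D' \<union> cnbh E' x) \<inter> A \<subseteq> D \<union> cnbh E x" using Cons.prems(2,3) by auto
  qed (fact Cons.prems(4))
  ultimately show ?case by simp
qed



abbreviation "Pn E \<equiv> (\<lambda>x D. cnbh E x - D \<noteq> {})"

context
  fixes V :: "'a set" and E :: "'a \<Rightarrow> 'a \<Rightarrow> bool"
    and VV :: "'a \<Rightarrow> 'b set" and EE :: "'a \<Rightarrow> 'b \<Rightarrow> 'b \<Rightarrow> bool"
  assumes G: "graph V E"
    and GV: "\<And>v. v \<in> V \<Longrightarrow> graph (VV v) (EE v)"
    and DJ: "\<And>u v. u \<in> V \<Longrightarrow> v \<in> V \<Longrightarrow> u \<noteq> v \<Longrightarrow> VV u \<inter> VV v = {}"
begin

lemma vv_uniq: "u \<in> V \<Longrightarrow> x \<in> V \<Longrightarrow> a \<in> VV u \<Longrightarrow> a \<in> VV x \<Longrightarrow> u = x"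
  using DJ by blast

lemma key_nbr:
  assumes "u \<in> V" "z \<in> V" "a \<in> VV u" "b \<in> VV z" "b \<in> cnbh (xjoin_E V E VV EE) a"
  shows "z \<in> cnbh E u"
proof -
  have "b = a \<or> xjoin_E V E VV EE a b" using assms(5) unfolding cnbh_def by auto
  then show ?thesis
  proof
    assume "b = a" then show ?thesis using vv_uniq assms unfolding cnbh_def by blast
  next
    assume "xjoin_E V E VV EE a b"
    then have "(\<exists>w\<in>V. a \<in> VV w \<and> b \<in> VV w \<and> EE w a b) \<or>
     (\<exists>u'\<in>V. \<exists>w\<in>V. E u' w \<and> a \<in> VV u' \<and> b \<in> VV w)" unfolding xjoin_E_def .
    then show ?thesis
    proof
      assume "\<exists>w\<in>V. a \<in> VV w \<and> b \<in> VV w \<and> EE w a b"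
      then obtain w where "w \<in> V" "a \<in> VV w" "b \<in> VV w" by blast
      then have "w = u" "w = z" using vv_uniq assms by blast+
      then show ?thesis unfolding cnbh_def by simp
    next
      assume "\<exists>u'\<in>V. \<exists>w\<in>V. E u' w \<and> a \<in> VV u' \<and> b \<in> VV w"
      then obtain u' w where "u' \<in> V" "w \<in> V" "E u' w" "a \<in> VV u'" "b \<in> VV w" by blast
      then have "u' = u" "w = z" using vv_uniq assms by blast+
      then show ?thesis using \<open>E u' w\<close> unfolding cnbh_def by simp
    qed
  qed
qed

lemma cn_local:
  assumes "x \<in> V" "a \<in> VV x"
  shows "cnbh (EE x) a \<subseteq> cnbh (xjoin_E V E VV EE) a \<inter> VV x \<and>
         cnbh (xjoin_E V E VV EE) a \<inter> VV x \<subseteq> cnbh (EE x) a"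
proof
  have g: "graph (VV x) (EE x)" using GV assms by blast
  show "cnbh (EE x) a \<subseteq> cnbh (xjoin_E V E VV EE) a \<inter> VV x"
  proof
    fix b assume "b \<in> cnbh (EE x) a"
    then have "b = a \<or> EE x a b" unfolding cnbh_def by auto
    then show "b \<in> cnbh (xjoin_E V E VV EE) a \<inter> VV x"
    proof
      assume "b = a" then show ?thesis using assms unfolding cnbh_def by simp
    next
      assume e: "EE x a b"
      then have "b \<in> VV x" using g unfolding graph_def by blast
      moreover have "xjoin_E V E VV EE a b" unfolding xjoin_E_def using e assms \<open>b \<in> VV x\<close> by blast
      ultimately show ?thesis unfolding cnbh_def by simp
    qed
  qed
  show "cnbh (xjoin_E V E VV EE) a \<inter> VV x \<subseteq> cnbh (EE x) a"
  proof
    fix b assume b: "b \<in> cnbh (xjoin_E V E VV EE) a \<inter> VV x"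
    then have "b = a \<or> xjoin_E V E VV EE a b" unfolding cnbh_def by auto
    then show "b \<in> cnbh (EE x) a"
    proof
      assume "b = a" then show ?thesis unfolding cnbh_def by simp
    next
      assume "xjoin_E V E VV EE a b"
      then have "(\<exists>w\<in>V. a \<in> VV w \<and> b \<in> VV w \<and> EE w a b) \<or>
       (\<exists>u'\<in>V. \<exists>w\<in>V. E u' w \<and> a \<in> VV u' \<and> b \<in> VV w)" unfolding xjoin_E_def .
      then show ?thesis
      proof
        assume "\<exists>w\<in>V. a \<in> VV w \<and> b \<in> VV w \<and> EE w a b"
        then obtain w where "w \<in> V" "a \<in> VV w" "EE w a b" by blast
        then have "w = x" using vv_uniq assms by blast
        then show ?thesis using \<open>EE w a b\<close> unfolding cnbh_def by simp
      next
        assume "\<exists>u'\<in>V. \<exists>w\<in>V. E u' w \<and> a \<in> VV u' \<and> b \<in> VV w"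
        then obtain u' w where "u' \<in> V" "w \<in> V" "E u' w" "a \<in> VV u'" "b \<in> VV w" by blast
        then have "u' = x" "w = x" using vv_uniq assms b by blast+
        then show ?thesis using \<open>E u' w\<close> G unfolding graph_def by blast
      qed
    qed
  qed
qed

lemma main_chk:
  assumes "chk E (\<lambda>x D. (x\<in>I \<longrightarrow> x\<notin>D) \<and> (x\<notin>I \<longrightarrow> (\<exists>y. E x y \<and> y \<notin> D))) D S"
    and "set S \<subseteq> V"
    and "\<forall>z\<in>V. z \<notin> D \<longrightarrow> VV z \<inter> D' = {}"
    and "\<forall>x\<in>set S. set (blk x) \<subseteq> VV x"
    and "\<forall>x\<in>set S. x \<in> I \<longrightarrow> chk (EE x) (Pn (EE x)) {} (blk x)"
    and "\<forall>x\<in>set S. x \<notin> I \<longrightarrow> blk x = [c x]"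
    and "\<forall>y\<in>V. c y \<in> VV y"
  shows "chk (xjoin_E V E VV EE) (Pn (xjoin_E V E VV EE)) D' (concat (map blk S))"
  using assms
proof (induction S arbitrary: D D')
  case Nil then show ?case by simp
next
  case (Cons x xs)
  let ?E' = "xjoin_E V E VV EE"
  have xV: "x \<in> V" using Cons.prems(2) by simp
  have first: "chk ?E' (Pn ?E') D' (blk x)"
  proof (cases "x \<in> I")
    case True
    then have "x \<notin> D" using Cons.prems(1) by simp
    then have dd: "D' \<inter> VV x \<subseteq> {}" using Cons.prems(3) xV by blast
    show ?thesis
    proof (rule chk_transfer[where E="EE x" and A="VV x" and D="{}"])
      show "chk (EE x) (Pn (EE x)) {} (blk x)" using Cons.prems(5) True by simp
      show "\<forall>a\<in>set (blk x). cnbh (EE x) a \<subseteq> cnbh ?E' a \<inter> VV x \<and> cnbh ?E' a \<inter> VV x \<subseteq> cnbh (EE x) a"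
        using cn_local[OF xV] Cons.prems(4) by auto
    qed (use dd in auto)
  next
    case False
    then obtain y where y: "E x y" "y \<notin> D" using Cons.prems(1) by auto
    have yV: "y \<in> V" using y G unfolding graph_def by blast
    have cy: "c y \<in> VV y" "c x \<in> VV x" using Cons.prems(7) yV xV by auto
    have "c y \<notin> D'" using Cons.prems(3) yV y cy by blast
    moreover have "c y \<in> cnbh ?E' (c x)" unfolding cnbh_def xjoin_E_def using y xV yV cy by blast
    ultimately show ?thesis using Cons.prems(6) False by auto
  qed
  have rest: "chk ?E' (Pn ?E') (D' \<union> \<Union>(cnbh ?E' ` set (blk x))) (concat (map blk xs))"
  proof (rule Cons.IH)
    show "chk E (\<lambda>x D. (x\<in>I \<longrightarrow> x\<notin>D) \<and> (x\<notin>I \<longrightarrow> (\<exists>y. E x y \<and> y \<notin> D))) (D \<union> cnbh E x) xs"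
      using Cons.prems(1) by simp
    show "\<forall>z\<in>V. z \<notin> D \<union> cnbh E x \<longrightarrow> VV z \<inter> (D' \<union> \<Union>(cnbh ?E' ` set (blk x))) = {}"
    proof (intro ballI impI)
      fix z assume z: "z \<in> V" "z \<notin> D \<union> cnbh E x"
      have "VV z \<inter> D' = {}" using z Cons.prems(3) by blast
      moreover have "b \<notin> cnbh ?E' a" if "b \<in> VV z" "a \<in> set (blk x)" for a b
      proof
        assume "b \<in> cnbh ?E' a"
        moreover have "a \<in> VV x" using that Cons.prems(4) by auto
        ultimately have "z \<in> cnbh E x" using key_nbr[OF xV z(1)] that by blast
        then show False using z by blast
      qed
      ultimately show "VV z \<inter> (D' \<union> \<Union>(cnbh ?E' ` set (blk x))) = {}" by blast
    qed
  qed (use Cons.prems in auto)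
  show ?case using first rest by (simp add: chk_append)
qed

lemma main_distinct:
  assumes "distinct S" "set S \<subseteq> V" "\<forall>x\<in>set S. distinct (blk x) \<and> set (blk x) \<subseteq> VV x"
  shows "distinct (concat (map blk S))"
  using assms
proof (induction S)
  case Nil then show ?case by simp
next
  case (Cons x xs)
  have "set (concat (map blk xs)) \<subseteq> (\<Union>y\<in>set xs. VV y)" using Cons.prems(3) by fastforce
  moreover have "VV x \<inter> (\<Union>y\<in>set xs. VV y) = {}" using DJ Cons.prems(1,2) by fastforce
  ultimately have "set (blk x) \<inter> set (concat (map blk xs)) = {}" using Cons.prems(3) by auto
  then show ?case using Cons by simp
qed

end


context
  fixes V :: "'a set" and E :: "'a \<Rightarrow> 'a \<Rightarrow> bool"
    and VV :: "'a \<Rightarrow> 'b set" and EE :: "'a \<Rightarrow> 'b \<Rightarrow> 'b \<Rightarrow> bool"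
  assumes G: "graph V E"
    and GV: "\<And>v. v \<in> V \<Longrightarrow> graph (VV v) (EE v)"
    and DJ: "\<And>u v. u \<in> V \<Longrightarrow> v \<in> V \<Longrightarrow> u \<noteq> v \<Longrightarrow> VV u \<inter> VV v = {}"
begin

lemma bound_seq:
  assumes S: "S \<in> legal_seqs_I V E I"
  shows "\<exists>R \<in> legal_seqs (xjoin_V V VV) (xjoin_E V E VV EE).
     length R + card I = length S + (\<Sum>v\<in>I. grundy_dom (VV v) (EE v)) \<and> card I \<le> length S"
proof -
  let ?E' = "xjoin_E V E VV EE" and ?V' = "xjoin_V V VV"
  have L: "legal_dom_seq V E S" and SF: "self_footprinted V E S = I"
    using S unfolding legal_seqs_I_def legal_seqs_def by auto
  have dS: "distinct S" and sV: "set S \<subseteq> V" and pnS: "\<forall>i<length S. pn E S i \<noteq> {}"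
    using L unfolding legal_dom_seq_def dominating_def by auto
  have fin: "finite V" using G unfolding graph_def by blast
  have finv: "\<And>v. v \<in> V \<Longrightarrow> finite (VV v)" and nev: "\<And>v. v \<in> V \<Longrightarrow> VV v \<noteq> {}"
    using GV unfolding graph_def by blast+
  define c where "c y = (SOME a. a \<in> VV y)" for y
  have cV: "\<forall>y\<in>V. c y \<in> VV y" unfolding c_def using nev by (simp add: some_in_eq)
  define T where "T y = (SOME L. L \<in> legal_seqs (VV y) (EE y) \<and> length L = grundy_dom (VV y) (EE y))" for y
  have T: "T y \<in> legal_seqs (VV y) (EE y) \<and> length (T y) = grundy_dom (VV y) (EE y)" if "y \<in> V" for y
    unfolding T_def using grundy_ex[OF finv[OF that]] by (rule someI_ex)
  define blk where "blk y = (if y \<in> I then T y else [c y])" for y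
  have IS: "I \<subseteq> set S"
  proof
    fix x assume "x \<in> I"
    then have x: "x \<in> V" "footprinter E S x = x" using SF unfolding self_footprinted_def by auto
    obtain j where "j < length S" "x \<in> pn E S j" using foot_ex[OF L x(1)] by blast
    then show "x \<in> set S" using foot_eq x by (metis nth_mem)
  qed
  have blkV: "\<forall>x\<in>set S. distinct (blk x) \<and> set (blk x) \<subseteq> VV x"
  proof
    fix x assume "x \<in> set S"
    then have xV: "x \<in> V" using sV by auto
    show "distinct (blk x) \<and> set (blk x) \<subseteq> VV x"
      using T[OF xV] cV xV unfolding blk_def legal_seqs_def legal_dom_seq_def dominating_def by auto
  qed
  have blkne: "\<exists>a. a \<in> set (blk x)" if "x \<in> set S" for x
  proof (cases "x \<in> I")
    case True
    have xV: "x \<in> V" using that sV by auto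
    obtain b where "b \<in> VV x" using nev[OF xV] by blast
    then show ?thesis using T[OF xV] True unfolding blk_def legal_seqs_def legal_dom_seq_def dominating_def
      by auto
  next
    case False then show ?thesis unfolding blk_def by auto
  qed
  define R where "R = concat (map blk S)"
  have good: "chk E (\<lambda>x D. (x\<in>I \<longrightarrow> x\<notin>D) \<and> (x\<notin>I \<longrightarrow> (\<exists>y. E x y \<and> y \<notin> D))) {} S"
    unfolding chk_nth
  proof (intro allI impI)
    fix k assume k: "k < length S"
    let ?U = "{} \<union> (\<Union>j<k. cnbh E (S!j))"
    have "S!k \<notin> ?U" if "S!k \<in> I"
    proof -
      have x: "S!k \<in> V" "footprinter E S (S!k) = S!k" using that SF unfolding self_footprinted_def by auto
      obtain j where j: "j < length S" "S!k \<in> pn E S j" using foot_ex[OF L x(1)] by blast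
      then have "S!j = S!k" using foot_eq x by metis
      then have "j = k" using dS j k by (simp add: nth_eq_iff_index_eq)
      then show ?thesis using j unfolding pn_def by auto
    qed
    moreover have "\<exists>y. E (S!k) y \<and> y \<notin> ?U" if "S!k \<notin> I"
    proof -
      obtain y where y: "y \<in> pn E S k" using pnS k by blast
      have "y \<noteq> S!k"
      proof
        assume "y = S!k"
        then have "footprinter E S y = y" using foot_eq[OF k y] by simp
        moreover have "y \<in> V" using \<open>y = S!k\<close> sV k by auto
        ultimately have "y \<in> I" using SF unfolding self_footprinted_def by auto
        then show False using that \<open>y = S!k\<close> by simp
      qed
      then have "E (S!k) y" using y unfolding pn_def cnbh_def by auto
      then show ?thesis using y unfolding pn_def by auto
    qed
    ultimately show "(S!k \<in> I \<longrightarrow> S!k \<notin> ?U) \<and> (S!k \<notin> I \<longrightarrow> (\<exists>y. E (S!k) y \<and> y \<notin> ?U))" by blast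
  qed
  have chkR: "chk ?E' (Pn ?E') {} R" unfolding R_def
  proof (rule main_chk[of V E VV EE, OF G GV DJ good sV])
    show "\<forall>z\<in>V. z \<notin> {} \<longrightarrow> VV z \<inter> {} = {}" by simp
    show "\<forall>x\<in>set S. set (blk x) \<subseteq> VV x" using blkV by blast
    show "\<forall>x\<in>set S. x \<in> I \<longrightarrow> chk (EE x) (Pn (EE x)) {} (blk x)"
    proof (intro ballI impI)
      fix x assume x: "x \<in> set S" "x \<in> I"
      then have xV: "x \<in> V" using sV by blast
      have "legal_dom_seq (VV x) (EE x) (T x)" using T[OF xV] unfolding legal_seqs_def by simp
      then have "chk (EE x) (Pn (EE x)) {} (T x)" using pn_chk[of "T x" "EE x"] unfolding legal_dom_seq_def by simp
      then show "chk (EE x) (Pn (EE x)) {} (blk x)" using x unfolding blk_def by simp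
    qed
    show "\<forall>x\<in>set S. x \<notin> I \<longrightarrow> blk x = [c x]" unfolding blk_def by simp
    show "\<forall>y\<in>V. c y \<in> VV y" by (rule cV)
  qed
  have dR: "distinct R" unfolding R_def using main_distinct[of V E VV EE, OF G GV DJ dS sV blkV] .
  have inR: "a \<in> set R" if "x \<in> set S" "a \<in> set (blk x)" for x a
    unfolding R_def set_concat set_map using that by blast
  have setR: "set R \<subseteq> ?V'"
  proof
    fix a assume "a \<in> set R"
    then obtain x where x: "x \<in> set S" "a \<in> set (blk x)" unfolding R_def set_concat set_map by blast
    then have "a \<in> VV x" "x \<in> V" using blkV sV by blast+
    then show "a \<in> ?V'" unfolding xjoin_V_def by blast
  qed
  have domR: "\<exists>a\<in>set R. b \<in> cnbh ?E' a" if bV: "b \<in> ?V'" for b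
  proof -
    obtain x where x: "x \<in> V" "b \<in> VV x" using bV unfolding xjoin_V_def by blast
    show ?thesis
    proof (cases "x \<in> I")
      case True
      then have "x \<in> set S" using IS by auto
      have "dominating (VV x) (EE x) (set (T x))" using T[OF x(1)] unfolding legal_seqs_def legal_dom_seq_def by auto
      then obtain a where a: "a \<in> set (T x)" "b \<in> cnbh (EE x) a" using x unfolding dominating_def by blast
      have "set (blk x) \<subseteq> VV x" using blkV \<open>x \<in> set S\<close> by blast
      then have aV: "a \<in> VV x" using a(1) True unfolding blk_def by auto
      have "cnbh (EE x) a \<subseteq> cnbh ?E' a" using cn_local[of V E VV EE, OF G GV DJ x(1) aV] by blast
      then have "b \<in> cnbh ?E' a" using a(2) by blast
      moreover have "a \<in> set R" using inR[OF \<open>x \<in> set S\<close>, of a] a True unfolding blk_def by simp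
      ultimately show ?thesis by blast
    next
      case False
      obtain j where j: "j < length S" "x \<in> pn E S j" using foot_ex[OF L x(1)] by blast
      have "footprinter E S x = S!j" using foot_eq[OF j] .
      then have "S!j \<noteq> x" using False x(1) SF unfolding self_footprinted_def by auto
      moreover have "x \<in> cnbh E (S!j)" using j(2) unfolding pn_def by blast
      ultimately have e: "E (S!j) x" by (auto simp: cnbh_def)
      have sj: "S!j \<in> set S" "S!j \<in> V" using j sV by auto
      obtain a where a: "a \<in> set (blk (S!j))" using blkne[OF sj(1)] by blast
      have "set (blk (S!j)) \<subseteq> VV (S!j)" using blkV sj(1) by blast
      then have aV: "a \<in> VV (S!j)" using a by blast
      have "xjoin_E V E VV EE a b" unfolding xjoin_E_def using e sj(2) x aV by blast
      then have "b \<in> cnbh ?E' a" by (simp add: cnbh_def)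
      moreover have "a \<in> set R" using inR[OF sj(1) a] .
      ultimately show ?thesis by blast
    qed
  qed
  have "R \<in> legal_seqs ?V' ?E'"
  proof -
    have "\<forall>i<length R. pn ?E' R i \<noteq> {}" using pn_chk[of R ?E'] chkR by simp
    moreover have "dominating ?V' ?E' (set R)" unfolding dominating_def using setR domR by blast
    ultimately show ?thesis unfolding legal_seqs_def legal_dom_seq_def using dR by simp
  qed
  moreover have "length R + card I = length S + (\<Sum>v\<in>I. grundy_dom (VV v) (EE v))"
  proof -
    have "length R = (\<Sum>x\<in>set S. length (blk x))"
      unfolding R_def by (simp add: length_concat sum_list_distinct_conv_sum_set[OF dS])
    also have "\<dots> = (\<Sum>x\<in>set S - I. length (blk x)) + (\<Sum>x\<in>I. length (blk x))"
      using IS by (simp add: sum.subset_diff)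
    also have "(\<Sum>x\<in>set S - I. length (blk x)) = card (set S - I)"
      unfolding blk_def by simp
    also have "(\<Sum>x\<in>I. length (blk x)) = (\<Sum>v\<in>I. grundy_dom (VV v) (EE v))"
      using T IS sV unfolding blk_def by (intro sum.cong) auto
    also have "card (set S - I) = length S - card I"
      using IS by (simp add: card_Diff_subset finite_subset distinct_card[OF dS])
    finally show ?thesis using card_mono[OF _ IS] distinct_card[OF dS] by simp
  qed
  moreover have "card I \<le> length S" using card_mono[OF _ IS] distinct_card[OF dS] by simp
  ultimately show ?thesis by blast
qed

end


theorem lemma1:
  fixes V :: "'a set" and E :: "'a \<Rightarrow> 'a \<Rightarrow> bool"
    and VV :: "'a \<Rightarrow> 'b set" and EE :: "'a \<Rightarrow> 'b \<Rightarrow> 'b \<Rightarrow> bool"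
  assumes "graph V E"
    and "\<And>v. v \<in> V \<Longrightarrow> graph (VV v) (EE v)"
    and "\<And>u v. u \<in> V \<Longrightarrow> v \<in> V \<Longrightarrow> u \<noteq> v \<Longrightarrow> VV u \<inter> VV v = {}"
  shows "ereal (real (grundy_dom (xjoin_V V VV) (xjoin_E V E VV EE))) \<ge>
    Max {grundy_dom_I V E I + ereal (real (\<Sum>v\<in>I. grundy_dom (VV v) (EE v))) - ereal (real (card I))
         | I. independent V E I}"
proof -
  let ?f = "\<lambda>I. grundy_dom_I V E I + ereal (real (\<Sum>v\<in>I. grundy_dom (VV v) (EE v))) - ereal (real (card I))"
  let ?g = "grundy_dom (xjoin_V V VV) (xjoin_E V E VV EE)"
  have fin: "finite V" using assms(1) unfolding graph_def by blast
  have finV': "finite (xjoin_V V VV)" unfolding xjoin_V_def using fin assms(2) unfolding graph_def by blast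
  have eq: "{?f I | I. independent V E I} = ?f ` {I. independent V E I}" by blast
  have finI: "finite {I. independent V E I}"
    by (rule finite_subset[of _ "Pow V"]) (auto simp: independent_def fin)
  have neI: "{I. independent V E I} \<noteq> {}"
  proof -
    have "independent V E {}" unfolding independent_def by simp
    then show ?thesis by blast
  qed
  have bound: "?f I \<le> ereal (real ?g)" if ind: "independent V E I" for I
  proof (cases "legal_seqs_I V E I = {}")
    case True then show ?thesis by (simp add: grundy_dom_I_def)
  next
    case False
    have finL: "finite (legal_seqs_I V E I)"
      by (rule finite_subset[OF _ legal_finite[OF fin, of E]]) (auto simp: legal_seqs_I_def)
    have "Max (length ` legal_seqs_I V E I) \<in> length ` legal_seqs_I V E I"
      using finL False by (intro Max_in) auto
    then obtain S where S: "S \<in> legal_seqs_I V E I" "length S = Max (length ` legal_seqs_I V E I)" by auto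
    obtain R where R: "R \<in> legal_seqs (xjoin_V V VV) (xjoin_E V E VV EE)"
      "length R + card I = length S + (\<Sum>v\<in>I. grundy_dom (VV v) (EE v))" "card I \<le> length S"
      using bound_seq[of V E VV EE, OF assms S(1)] by blast
    have Rg: "length R \<le> ?g" using grundy_ge[OF finV' R(1)] .
    have "?f I = ereal (real (length S) + real (\<Sum>v\<in>I. grundy_dom (VV v) (EE v)) - real (card I))"
      using False S(2) by (simp add: grundy_dom_I_def)
    also have "real (length S) + real (\<Sum>v\<in>I. grundy_dom (VV v) (EE v)) - real (card I) = real (length R)"
      using R(2) by (metis add_diff_cancel_right' of_nat_add)
    finally show ?thesis using Rg by simp
  qed
  show ?thesis unfolding eq using finI neI bound by (simp add: Max_le_iff)
qed


end
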